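(* Let $S^3$ be the group of unit quaternions (the unit sphere in $\mathbb R^4$ with quaternion multiplication), a compact topological group. Then $S^3$ admits no invariant binary closed $k$-network, i.e. there is no binary closed $k$-network $\mathcal N$ in $S^3$ such that $xAy\in\mathcal N$ for all $A\in\mathcal N$ and $x,y\in S^3$.
   Context: A family $\mathcal A$ of sets is linked if $A\cap B\neq\emptyset$ for all $A,B\in\mathcal A$; centered if every finite subfamily has nonempty intersection; binary if every linked subfamily of $\mathcal A$ is centered. A family $\mathcal N$ of closed subsets of a topological space $X$ is a closed $k$-network if for every open $U\subset X$ and every compact $K\subset U$ there is a finite $\mathcal F\subset\mathcal N$ with $K\subset\bigcup\mathcal F\subset U$. A family $\mathcal F$ of subsets of a group $G$ is invariant if $gF\in\mathcal F$ and $Fg\in\mathcal F$ for all $F\in\mathcal F$, $g\in G$. *)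

theory Defs
  imports "HOL-Analysis.Analysis"
begin

text \<open>Quaternions are modelled as vectors in real^4, components 1,2,3,4 = (re, i, j, k),
  with the Hamilton product.\<close>

definition qmult :: "real^4 \<Rightarrow> real^4 \<Rightarrow> real^4" where
  "qmult p q = (\<chi> n.
     if n = 1 then p$1*q$1 - p$2*q$2 - p$3*q$3 - p$4*q$4
     else if n = 2 then p$1*q$2 + p$2*q$1 + p$3*q$4 - p$4*q$3
     else if n = 3 then p$1*q$3 - p$2*q$4 + p$3*q$1 + p$4*q$2
     else p$1*q$4 + p$2*q$3 - p$3*q$2 + p$4*q$1)"

definition S3 :: "(real^4) set" where
  "S3 = sphere 0 1"

definition linked :: "'a set set \<Rightarrow> bool" where
  "linked \<A> \<longleftrightarrow> (\<forall>A\<in>\<A>. \<forall>B\<in>\<A>. A \<inter> B \<noteq> {})"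

definition centered :: "'a set set \<Rightarrow> bool" where
  "centered \<A> \<longleftrightarrow> (\<forall>\<F>. \<F> \<subseteq> \<A> \<and> finite \<F> \<and> \<F> \<noteq> {} \<longrightarrow> \<Inter>\<F> \<noteq> {})"

definition binary :: "'a set set \<Rightarrow> bool" where
  "binary \<A> \<longleftrightarrow> (\<forall>\<B>. \<B> \<subseteq> \<A> \<and> linked \<B> \<longrightarrow> centered \<B>)"

definition closed_k_network :: "'a topology \<Rightarrow> 'a set set \<Rightarrow> bool" where
  "closed_k_network X \<N> \<longleftrightarrow>
     (\<forall>N\<in>\<N>. closedin X N) \<and>
     (\<forall>U K. openin X U \<and> compactin X K \<and> K \<subseteq> U \<longrightarrow>
        (\<exists>\<F>. finite \<F> \<and> \<F> \<subseteq> \<N> \<and> K \<subseteq> \<Union>\<F> \<and> \<Union>\<F> \<subseteq> U))"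

end

theory Submission
  imports Defs
begin


definition one4 :: "real^4" where "one4 = (\<chi> i. if i = 1 then 1 else 0)"
definition cnj :: "real^4 \<Rightarrow> real^4" where "cnj u = (\<chi> i. if i = 1 then (u$1) else - u$i)"

lemma inner4: "inner (u::real^4) v = (u$1)*(v$1) + (u$2)*(v$2) + (u$3)*(v$3) + (u$4)*(v$4)"
  by (simp add: inner_vec_def sum_4)

lemma norm4sq: "(norm (u::real^4))^2 = (u$1)^2 + (u$2)^2 + (u$3)^2 + (u$4)^2"
  by (simp add: power2_norm_eq_inner inner4 power2_eq_square[symmetric])

lemma qcomp:
  "(qmult p q) $ 1 = (p$1)*(q$1) - (p$2)*(q$2) - (p$3)*(q$3) - (p$4)*(q$4)"
  "(qmult p q) $ 2 = (p$1)*(q$2) + (p$2)*(q$1) + (p$3)*(q$4) - (p$4)*(q$3)"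
  "(qmult p q) $ 3 = (p$1)*(q$3) - (p$2)*(q$4) + (p$3)*(q$1) + (p$4)*(q$2)"
  "(qmult p q) $ 4 = (p$1)*(q$4) + (p$2)*(q$3) - (p$3)*(q$2) + (p$4)*(q$1)"
  by (simp_all add: qmult_def)

lemma one4c: "one4$1 = 1" "one4$2 = 0" "one4$3 = 0" "one4$4 = 0"
  by (simp_all add: one4_def)
lemma cnjc: "(cnj u)$1 = (u$1)" "(cnj u)$2 = - (u$2)" "(cnj u)$3 = - (u$3)" "(cnj u)$4 = - (u$4)"
  by (simp_all add: cnj_def)

lemma q_one: "qmult z one4 = z"
  by (simp add: vec_eq_iff forall_4 qcomp one4c)

lemma q_inner: "inner (qmult u v) (qmult u w) = (norm u)^2 * inner v w"
  by (simp add: inner4 norm4sq qcomp) algebra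

lemma q_norm: "norm (qmult u v) = norm u * norm v"
proof -
  have "(norm (qmult u v))^2 = (norm u * norm v)^2"
    using q_inner[of u v v] by (simp add: power_mult_distrib power2_norm_eq_inner[symmetric])
  thus ?thesis by (simp add: power2_eq_iff_nonneg)
qed

lemma q_cnj_self: "qmult (cnj u) u = (norm u)^2 *\<^sub>R one4"
  by (simp add: vec_eq_iff forall_4 qcomp cnjc one4c norm4sq) (simp add: power2_eq_square)

lemma q_re: "(qmult (cnj u) v) $ 1 = inner u v"
  by (simp add: qcomp cnjc inner4)

lemma norm_cnj: "norm (cnj u) = norm u"
  by (simp add: norm_eq_sqrt_inner inner4 cnjc)

lemma q_lin2: "qmult u (v - c *\<^sub>R w) = qmult u v - c *\<^sub>R qmult u w"
  by (simp add: vec_eq_iff forall_4 qcomp) (simp add: algebra_simps)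




definition Eq :: "real^4 \<Rightarrow> real^4" where
  "Eq p = (\<chi> i. if i = 1 then 1/2 else p$i)"
definition E2q :: "real^4 \<Rightarrow> real^4" where
  "E2q p = (\<chi> i. if i = 1 then -1/2 else p$i)"
definition Rq where "Rq p z = qmult (qmult (Eq p) z) (Eq p)"
definition R2q where "R2q p z = qmult (qmult (E2q p) z) (E2q p)"

lemma Eqc: "(Eq p)$1 = 1/2" "(Eq p)$2 = p$2" "(Eq p)$3 = p$3" "(Eq p)$4 = p$4"
  by (simp_all add: Eq_def)
lemma E2qc: "(E2q p)$1 = -1/2" "(E2q p)$2 = p$2" "(E2q p)$3 = p$3" "(E2q p)$4 = p$4"
  by (simp_all add: E2q_def)

definition Rf where "Rf p z = z - (3/2 * z$1 + inner z p) *\<^sub>R one4 - (2 * inner z p - z$1) *\<^sub>R p"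
definition R2f where "R2f p z = z - (3/2 * z$1 - inner z p) *\<^sub>R one4 - (2 * inner z p + z$1) *\<^sub>R p"

lemmas unf = vec_eq_iff forall_4 qcomp Eqc E2qc Rf_def R2f_def vector_minus_component vector_add_component
       vector_scaleR_component one4c inner4 real_scaleR_def

lemma R_formula:
  assumes "p$1 = 0" "(p$2)*(p$2) + (p$3)*(p$3) + (p$4)*(p$4) = 3/4"
  shows "Rq p z = Rf p z"
  unfolding Rq_def unf assms(1)
  apply (intro conjI)
  using assms(2) by algebra+

lemma R2_formula:
  assumes "p$1 = 0" "(p$2)*(p$2) + (p$3)*(p$3) + (p$4)*(p$4) = 3/4"
  shows "R2q p z = R2f p z"
  unfolding R2q_def unf assms(1)
  apply (intro conjI)
  using assms(2) by algebra+

lemma Rf_R2f: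
  assumes "p$1 = 0" "(p$2)*(p$2) + (p$3)*(p$3) + (p$4)*(p$4) = 3/4"
  shows "Rf p (R2f p z) = z" "R2f p (Rf p z) = z" "Rf p (Rf p z) = R2f p z"
   "inner z p + inner (Rf p z) p + inner (R2f p z) p = 0"
  unfolding unf assms(1)
  using assms(2) by algebra+

lemma E_norm: assumes "p$1 = 0" "(p$2)*(p$2) + (p$3)*(p$3) + (p$4)*(p$4) = 3/4"
  shows "norm (Eq p) = 1" "norm (E2q p) = 1"
proof -
  have "(norm (Eq p))^2 = 1" "(norm (E2q p))^2 = 1" unfolding norm4sq Eqc E2qc using assms by (simp_all add: power2_eq_square)
  thus "norm (Eq p) = 1" "norm (E2q p) = 1" using norm_ge_zero[of "Eq p"] norm_ge_zero[of "E2q p"] by (auto simp add: power2_eq_1_iff)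
qed




lemma S3_mem: "x \<in> S3 \<longleftrightarrow> norm x = 1" by (simp add: S3_def)

lemma triangle_contra:
  assumes bin: "binary N"
    and inv: "\<forall>A\<in>N. \<forall>x\<in>S3. \<forall>y\<in>S3. (\<lambda>a. qmult (qmult x a) y) ` A \<in> N"
    and TN: "T \<in> N"
    and p1: "p$1 = 0" and p2: "(p$2)*(p$2) + (p$3)*(p$3) + (p$4)*(p$4) = 3/4"
    and t0: "t0 \<in> T" "Rf p t0 \<in> T"
    and pos: "\<forall>a\<in>T. inner a p > 0"
  shows False
proof -
  have ES: "Eq p \<in> S3" "E2q p \<in> S3" using E_norm[OF p1 p2] by (simp_all add: S3_mem)
  have RT: "Rf p ` T \<in> N"
  proof -
    have "(\<lambda>a. qmult (qmult (Eq p) a) (Eq p)) ` T \<in> N" using inv TN ES by blast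
    moreover have "(\<lambda>a. qmult (qmult (Eq p) a) (Eq p)) = Rf p"
      using R_formula[OF p1 p2] by (auto simp: Rq_def)
    ultimately show ?thesis by metis
  qed
  have R2T: "R2f p ` T \<in> N"
  proof -
    have "(\<lambda>a. qmult (qmult (E2q p) a) (E2q p)) ` T \<in> N" using inv TN ES by blast
    moreover have "(\<lambda>a. qmult (qmult (E2q p) a) (E2q p)) = R2f p"
      using R2_formula[OF p1 p2] by (auto simp: R2q_def)
    ultimately show ?thesis by metis
  qed
  note id = Rf_R2f[OF p1 p2]
  let ?B = "{T, Rf p ` T, R2f p ` T}"
  have i1: "Rf p t0 \<in> T \<inter> Rf p ` T" using t0 by auto
  have i2: "Rf p (Rf p t0) \<in> Rf p ` T \<inter> R2f p ` T"
  proof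
    show "Rf p (Rf p t0) \<in> Rf p ` T" using t0(2) by (rule imageI)
    show "Rf p (Rf p t0) \<in> R2f p ` T" unfolding id(3) using t0(1) by (rule imageI)
  qed
  have i3: "t0 \<in> T \<inter> R2f p ` T"
  proof
    show "t0 \<in> T" by (rule t0(1))
    have "R2f p (Rf p t0) \<in> R2f p ` T" using t0(2) by (rule imageI)
    thus "t0 \<in> R2f p ` T" unfolding id(2) .
  qed
  have ne: "T \<noteq> {}" using t0 by auto
  have h1: "T \<inter> Rf p ` T \<noteq> {}" using i1 by blast
  have h2: "Rf p ` T \<inter> R2f p ` T \<noteq> {}" using i2 by blast
  have h3: "T \<inter> R2f p ` T \<noteq> {}" using i3 by blast
  have lk: "linked ?B" unfolding linked_def using h1 h2 h3 ne by (simp add: Int_commute)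
  have sb: "?B \<subseteq> N" using TN RT R2T by simp
  have ce: "centered ?B" using bin[unfolded binary_def, rule_format, OF conjI[OF sb lk]] .
  have "\<Inter>?B \<noteq> {}" using ce[unfolded centered_def, rule_format, of ?B] by simp
  then obtain z where z: "z \<in> T" "z \<in> Rf p ` T" "z \<in> R2f p ` T" by auto
  then obtain a b where ab: "a \<in> T" "z = Rf p a" "b \<in> T" "z = R2f p b" by auto
  have "R2f p z = a" using ab(2) id(2)[of a] by simp
  moreover have "Rf p z = b" using ab(4) id(1)[of b] by simp
  ultimately have "inner z p > 0" "inner (Rf p z) p > 0" "inner (R2f p z) p > 0"
    using pos z(1) ab by auto
  hence "inner z p + inner (Rf p z) p + inner (R2f p z) p > 0" by simp
  thus False using id(4)[of z] by simp
qed


lemma std_contra: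
  assumes bin: "binary N"
    and inv: "\<forall>A\<in>N. \<forall>x\<in>S3. \<forall>y\<in>S3. (\<lambda>a. qmult (qmult x a) y) ` A \<in> N"
    and AN: "A \<in> N" and xA: "x \<in> A" and yA: "y \<in> A" and xy: "x \<noteq> y"
    and nx: "norm x = 1" and ny: "norm y = 1"
    and Q1: "inner (x - y) Q = 0" and Q2: "inner Q Q = 3/4" and Q3: "inner x Q = norm (x - y) / 4"
    and pos: "\<forall>a\<in>A. inner a Q > 0"
  shows False
proof -
  define d where "d = norm (x - y)"
  have dpos: "d > 0" using xy by (simp add: d_def)
  define e1 where "e1 = (1/d) *\<^sub>R (x - y)"
  have ne1: "norm e1 = 1" using dpos by (simp add: e1_def d_def)
  define c where "c = cnj e1"
  have nc: "norm c = 1" using ne1 by (simp add: c_def norm_cnj)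
  have cS: "c \<in> S3" "one4 \<in> S3" using nc by (simp_all add: S3_mem norm_eq_sqrt_inner inner4 one4c)
  define T where "T = (\<lambda>a. qmult (qmult c a) one4) ` A"
  have TN: "T \<in> N" using inv AN cS unfolding T_def by blast
  define p where "p = qmult c Q"
  have p1: "p$1 = 0" unfolding p_def c_def q_re e1_def using Q1 by (simp add: inner_commute)
  have "inner p p = 3/4" unfolding p_def q_inner nc using Q2 by simp
  hence p2: "(p$2)*(p$2) + (p$3)*(p$3) + (p$4)*(p$4) = 3/4" using p1 by (simp add: inner4)
  define t0 where "t0 = qmult c x"
  have t0T: "t0 \<in> T" unfolding T_def t0_def q_one using xA by simp
  have dd: "d * d = 2 - 2 * inner x y"
  proof -
    have xx: "inner x x = 1" "inner y y = 1" using nx ny by (metis power2_norm_eq_inner power_one)+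
    have "d*d = inner (x - y) (x - y)" by (simp add: d_def norm_eq_sqrt_inner)
    also have "\<dots> = inner x x + inner y y - 2 * inner x y"
      by (simp add: inner_diff_left inner_diff_right inner_commute)
    also have "\<dots> = 2 - 2 * inner x y" using xx by simp
    finally show ?thesis .
  qed
  have t01: "t0$1 = d/2"
  proof -
    have "t0$1 = inner e1 x" unfolding t0_def c_def q_re ..
    also have "\<dots> = (1/d) * (inner x x - inner x y)"
      by (simp add: e1_def inner_diff_left inner_diff_right inner_commute)
    also have "\<dots> = (1/d) * (1 - inner x y)" using nx by (metis power2_norm_eq_inner power_one)
    also have "\<dots> = d/2" using dd dpos by (simp add: field_simps)
    finally show ?thesis .
  qed
  have t0p: "inner t0 p = d/4" unfolding t0_def p_def q_inner nc using Q3 by (simp add: d_def)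
  have Rt0: "Rf p t0 = t0 - d *\<^sub>R one4"
    unfolding Rf_def t01 t0p by (simp add: algebra_simps)
  have ye: "y = x - d *\<^sub>R e1" using dpos by (simp add: e1_def)
  have "qmult c y = t0 - d *\<^sub>R one4"
    unfolding ye q_lin2 t0_def c_def q_cnj_self ne1 by simp
  hence Rt0T: "Rf p t0 \<in> T" using yA unfolding Rt0 T_def q_one by (metis image_eqI)
  have posT: "\<forall>a\<in>T. inner a p > 0"
    unfolding T_def p_def q_one using pos by (simp add: q_inner nc)
  show False using triangle_contra[OF bin inv TN p1 p2 t0T Rt0T posT] .
qed




lemma in1: "norm (x::real^4) = 1 \<Longrightarrow> inner x x = 1" by (metis power2_norm_eq_inner power_one)

lemma G4:
  fixes x y e :: "real^4"
  assumes nx: "norm x = 1" and ny: "norm y = 1" and xy: "x \<noteq> y"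
    and dle: "norm (x - y) \<le> 1/4"
    and ne: "norm e = 1" and xe: "inner x e = 0"
    and sy0: "0 \<le> inner y e / norm (x - y)" and sy1: "inner y e / norm (x - y) \<le> 1/100"
    and hA: "\<forall>a\<in>A. norm a = 1 \<and> norm (a - x) \<le> 1/4 \<and> norm (a - y) \<le> 1/4 \<and>
               inner a e - (inner y e / norm (x - y)) * norm (a - x) \<ge> - norm (x - y) / 100"
  shows "\<exists>Q. inner (x - y) Q = 0 \<and> inner Q Q = 3/4 \<and> inner x Q = norm (x - y) / 4 \<and> (\<forall>a\<in>A. inner a Q > 0)"
proof -
  define d where "d = norm (x - y)"
  define sy where "sy = inner y e / d"
  have dpos: "d > 0" using xy by (simp add: d_def)
  have dle': "d \<le> 1/4" using dle by (simp add: d_def)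
  have sy0': "0 \<le> sy" "sy \<le> 1/100" using sy0 sy1 by (simp_all add: sy_def d_def)
  have xx: "inner x x = 1" and yy: "inner y y = 1" and ee: "inner e e = 1" using nx ny ne by (simp_all add: in1)
  have dd: "d * d = 2 - 2 * inner x y"
  proof -
    have "d*d = inner (x - y) (x - y)" by (simp add: d_def norm_eq_sqrt_inner)
    also have "\<dots> = inner x x + inner y y - 2 * inner x y"
      by (simp add: inner_diff_left inner_diff_right inner_commute)
    finally show ?thesis using xx yy by simp
  qed
  have ye: "inner y e = sy * d" using dpos by (simp add: sy_def)
  define u where "u = (1/d) *\<^sub>R (y - x)"
  define w where "w = e - sy *\<^sub>R u"
  define m where "m = (1/2) *\<^sub>R (x + y)"
  define M where "M = 1 - d*d/4"
  have dd16: "d * d \<le> 1/16"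
  proof -
    have "d*d \<le> (1/4)*(1/4)" using dle' dpos by (intro mult_mono) auto
    thus ?thesis by simp
  qed
  have Mb: "63/64 \<le> M" "M \<le> 1" using dd16 dpos unfolding M_def by auto
  have ixy: "inner x y = 1 - d*d/2" using dd by linarith
  have mm0: "inner m m = (1/4)*(inner x x + 2*inner x y + inner y y)"
     "inner x m = (1/2)*(inner x x + inner x y)" "inner y m = (1/2)*(inner x y + inner y y)"
    unfolding m_def by (simp_all add: inner_add_left inner_add_right inner_commute algebra_simps)
  have mm: "inner m m = M" "inner x m = M" "inner y m = M"
    unfolding mm0 xx yy ixy M_def by simp_all
  define k where "k = sy * d / 2"
  have wx: "inner x w = k"
  proof -
    have "inner x w = inner x e - sy * ((1/d) * (inner x y - inner x x))"
      unfolding w_def u_def by (simp only: inner_diff_right inner_scaleR_right)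
    also have "\<dots> = sy * d / 2" unfolding xe xx ixy using dpos by (simp add: field_simps)
    finally show ?thesis by (simp add: k_def)
  qed
  have wy: "inner y w = k"
  proof -
    have "inner y w = inner y e - sy * ((1/d) * (inner y y - inner y x))"
      unfolding w_def u_def by (simp only: inner_diff_right inner_scaleR_right)
    also have "\<dots> = sy * d / 2" unfolding ye yy inner_commute[of y x] ixy using dpos by (simp add: field_simps)
    finally show ?thesis by (simp add: k_def)
  qed
  have ww: "inner w w = 1 - sy * sy"
  proof -
    have eu: "inner e u = sy" unfolding u_def using ye xe dpos by (simp add: inner_diff_right field_simps inner_commute)
    have uu: "inner u u = 1" unfolding u_def using dpos
      by (simp add: d_def dot_square_norm norm_minus_commute power2_eq_square)
    show ?thesis unfolding w_def using ee eu uu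
      by (simp add: inner_diff_left inner_diff_right inner_commute algebra_simps)
  qed
  have wm: "inner w m = k" unfolding m_def using wx wy by (simp add: inner_add_right inner_commute)
  define n where "n = w - (k/M) *\<^sub>R m"
  have Mpos: "M > 0" using Mb by simp
  have nx': "inner x n = 0" "inner y n = 0" "inner m n = 0"
    unfolding n_def using wx wy wm mm Mpos by (simp_all add: inner_diff_right inner_commute)
  have nn: "inner n n = 1 - sy * sy - k*k/M"
  proof -
    have "inner n n = inner w w - 2*(k/M)*inner w m + (k/M)*(k/M)*inner m m"
      unfolding n_def by (simp add: inner_diff_left inner_diff_right inner_commute algebra_simps)
    also have "\<dots> = inner w w - k*k/M" unfolding wm mm using Mpos by (simp add: field_simps)
    finally show ?thesis unfolding ww .
  qed
  have kb: "0 \<le> k" "k \<le> d / 200" using sy0' dpos unfolding k_def by (auto simp: field_simps)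
  have nnb: "inner n n \<ge> 1/2"
  proof -
    have "sy * sy \<le> 1/100 * (1/100)" using sy0' by (intro mult_mono) auto
    moreover have "k * k \<le> (1/800) * (1/800)" using kb dle' by (intro mult_mono) auto
    moreover have "k*k/M \<le> k*k/(1/2)" using Mb by (intro divide_left_mono) auto
    ultimately show ?thesis unfolding nn by simp
  qed
  define \<beta> where "\<beta> = d / (4 * M)"
  define \<alpha> where "\<alpha> = sqrt ((3/4 - \<beta> * \<beta> * M) / inner n n)"
  have b0: "0 \<le> \<beta>" unfolding \<beta>_def using dpos Mpos by simp
  have b12: "\<beta> \<le> 1/2" unfolding \<beta>_def using dle' Mb dpos by (simp add: divide_le_eq)
  have bb0: "0 \<le> \<beta> * \<beta> * M" using b0 Mpos by simp
  have bb: "\<beta> * \<beta> * M \<le> 1/4"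
  proof -
    have "\<beta>*\<beta> \<le> (1/2)*(1/2)" using b0 b12 by (intro mult_mono) auto
    moreover have "\<beta>*\<beta>*M \<le> \<beta>*\<beta>*1" using Mb b0 by (intro mult_left_mono) auto
    ultimately show ?thesis by simp
  qed
  have X0: "0 \<le> (3/4 - \<beta> * \<beta> * M) / inner n n" using bb nnb by simp
  have a2: "\<alpha> * \<alpha> * inner n n = 3/4 - \<beta> * \<beta> * M"
  proof -
    have "\<alpha> * \<alpha> = (3/4 - \<beta> * \<beta> * M) / inner n n" unfolding \<alpha>_def using X0 bb
      by (simp add: real_sqrt_mult_self)
    moreover have "n \<noteq> 0" using nnb by auto
    ultimately show ?thesis by (simp add: field_simps)
  qed
  have a0: "0 \<le> \<alpha>" unfolding \<alpha>_def using X0 by simp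
  have a_le: "\<alpha> \<le> 2"
  proof -
    have "(3/4 - \<beta> * \<beta> * M) \<le> 4 * inner n n" using bb0 nnb by simp
    hence "(3/4 - \<beta> * \<beta> * M) / inner n n \<le> 4" using nnb by (simp add: divide_le_eq)
    hence "\<alpha> \<le> sqrt 4" unfolding \<alpha>_def by (rule real_sqrt_le_mono)
    thus ?thesis by simp
  qed
  define Q where "Q = \<alpha> *\<^sub>R n + \<beta> *\<^sub>R m"
  have Q1: "inner (x - y) Q = 0" unfolding Q_def using nx' mm
    by (simp add: inner_diff_left inner_add_right)
  have Q2: "inner Q Q = 3/4" unfolding Q_def using nx' mm a2
    by (simp add: inner_add_left inner_add_right inner_commute algebra_simps)
  have Q3: "inner x Q = d/4" unfolding Q_def using nx' mm Mpos
    by (simp add: inner_add_right \<beta>_def)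
  have pos: "\<forall>a\<in>A. inner a Q > 0"
  proof
    fix a assume aA: "a \<in> A"
    have na: "norm a = 1" and ax: "norm (a - x) \<le> 1/4" and ay: "norm (a - y) \<le> 1/4"
      and key: "inner a e - sy * norm (a - x) \<ge> - d / 100"
      using hA aA by (auto simp: sy_def d_def)
    have aa: "inner a a = 1" using na by (simp add: in1)
    have am: "inner a m \<ge> 31/32"
    proof -
      have e1: "norm (a - x) ^ 2 = 2 - 2 * inner a x" using aa xx
        by (simp add: power2_norm_eq_inner inner_diff_left inner_diff_right inner_commute)
      have e2: "norm (a - y) ^ 2 = 2 - 2 * inner a y" using aa yy
        by (simp add: power2_norm_eq_inner inner_diff_left inner_diff_right inner_commute)
      have "norm (a - x) ^ 2 \<le> (1/4)^2" "norm (a - y) ^ 2 \<le> (1/4)^2"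
        using ax ay by (simp_all add: power_mono)
      hence "inner a x \<ge> 31/32" "inner a y \<ge> 31/32" using e1 e2 by (simp_all add: power2_eq_square)
      thus ?thesis unfolding m_def by (simp add: inner_add_right)
    qed
    have amx: "inner (a - x) m \<le> d*d/4"
    proof -
      have "inner a m \<le> norm a * norm m" by (rule norm_cauchy_schwarz)
      moreover have "norm m \<le> 1" using mm Mb by (simp add: norm_eq_sqrt_inner)
      ultimately have "inner a m \<le> 1" using na by simp
      thus ?thesis using mm unfolding M_def by (simp add: inner_diff_left)
    qed
    have awx: "inner (a - x) w \<ge> - d/100"
    proof -
      have "inner (a - x) w = inner a e - sy * inner (a - x) u"
        unfolding w_def using xe by (simp add: inner_diff_left inner_diff_right)
      moreover have au: "inner (a - x) u \<le> norm (a - x)"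
      proof -
        have "inner (a - x) u \<le> norm (a - x) * norm u" by (rule norm_cauchy_schwarz)
        moreover have "norm u = 1" unfolding u_def using dpos by (simp add: d_def norm_minus_commute)
        ultimately show ?thesis by simp
      qed
      moreover have "sy * inner (a - x) u \<le> sy * norm (a - x)" using au sy0' by (intro mult_left_mono) auto
      ultimately show ?thesis using key by linarith
    qed
    have an: "inner a n \<ge> - d/50"
    proof -
      have "inner a n = inner (a - x) w - (k/M) * inner (a - x) m"
        unfolding n_def using wx mm Mpos by (simp add: inner_diff_left inner_diff_right inner_commute field_simps)
      moreover have "(k/M) * inner (a - x) m \<le> (k/M) * (d*d/4)"
        using amx kb Mpos by (intro mult_left_mono) auto
      moreover have "(k/M) * (d*d/4) \<le> d / 100"
      proof -
        have k2: "k/M \<le> 2*k"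
        proof -
          have "k*1 \<le> k*(2*M)" using kb Mb by (intro mult_left_mono) auto
          thus ?thesis using Mpos by (simp add: divide_le_eq algebra_simps)
        qed
        have "(k/M) * (d*d/4) \<le> (k/M) * 1" using dd16 kb Mpos by (intro mult_left_mono) auto
        thus ?thesis using k2 kb by linarith
      qed
      ultimately show ?thesis using awx by linarith
    qed
    have b4: "\<beta> \<ge> d/4" unfolding \<beta>_def using Mb dpos by (simp add: field_simps)
    have "\<alpha> * inner a n \<ge> \<alpha> * (- d/50)" using an a0 by (intro mult_left_mono) auto
    moreover have "\<alpha> * (- d/50) \<ge> 2 * (- d/50)" using a_le dpos by (intro mult_right_mono_neg) auto
    ultimately have "\<alpha> * inner a n \<ge> - 2 * (d/50)" by simp
    moreover have "\<beta> * inner a m \<ge> (d/4) * (31/32)" using b4 am dpos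
      by (intro mult_mono) auto
    ultimately have "inner a Q \<ge> - 2 * (d/50) + (d/4) * (31/32)"
      unfolding Q_def by (simp add: inner_add_right)
    thus "inner a Q > 0" using dpos by simp
  qed
  show ?thesis using Q1 Q2 Q3 pos by (auto simp: d_def)
qed


lemma G1:
  fixes A :: "(real^4) set"
  assumes cA: "compact A" and ne: "A \<noteq> {}" and pos: "\<forall>a\<in>A. a$1 > 0"
  shows "\<exists>x e. x \<in> A \<and> norm e = 1 \<and> inner x e = 0 \<and> (\<forall>a\<in>A. inner a e \<ge> 0)"
proof -
  define f where "f a = a$2 / a$1" for a :: "real^4"
  have "continuous_on A f" unfolding f_def using pos
    by (intro continuous_intros) auto
  then obtain x where xA: "x \<in> A" and xmin: "\<forall>a\<in>A. f x \<le> f a"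
    using continuous_attains_inf[OF cA ne] by blast
  define e' :: "real^4" where "e' = axis 2 1 - f x *\<^sub>R one4"
  have ie: "inner a e' = a$2 - f x * a$1" for a
    unfolding e'_def by (simp add: inner_diff_right inner4 one4_def axis_def)
  have e'0: "e' \<noteq> 0"
  proof
    assume "e' = 0"
    hence "e'$2 = 0" by simp
    thus False unfolding e'_def by (simp add: one4_def axis_def)
  qed
  define e where "e = (1 / norm e') *\<^sub>R e'"
  have ne1: "norm e = 1" using e'0 by (simp add: e_def)
  have "inner x e' = 0" unfolding ie using pos xA by (simp add: f_def less_imp_neq[symmetric])
  hence xe: "inner x e = 0" by (simp add: e_def)
  have "\<forall>a\<in>A. inner a e' \<ge> 0"
  proof
    fix a assume aA: "a \<in> A"
    have "f x \<le> a$2 / a$1" using xmin aA by (simp add: f_def)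
    hence "f x * a$1 \<le> a$2" using pos aA by (simp add: le_divide_eq)
    thus "inner a e' \<ge> 0" unfolding ie by simp
  qed
  hence "\<forall>a\<in>A. inner a e \<ge> 0" by (simp add: e_def)
  thus ?thesis using xA ne1 xe by blast
qed

lemma G2:
  fixes A :: "(real^4) set"
  assumes cA: "compact A" and xA: "x \<in> A" and a2: "a2 \<in> A" "a2 \<noteq> x"
    and ne: "norm e = 1" and xe: "inner x e = 0" and sup: "\<forall>a\<in>A. inner a e \<ge> 0"
  shows "\<exists>e'. e' \<noteq> 0 \<and> inner x e' = 0 \<and> (\<forall>a\<in>A. inner a e' \<ge> 0) \<and>
            (\<forall>\<sigma>>0. \<exists>a\<in>A. a \<noteq> x \<and> inner a e' < \<sigma> * norm (a - x))"
proof -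
  have dimlt: "dim {x, e} < DIM(real^4)"
  proof -
    have "dim {x, e} \<le> card {x, e}" by (rule dim_le_card') simp
    also have "\<dots> \<le> 2" by (simp add: card_insert_le_m1)
    finally show ?thesis by simp
  qed
  then obtain w where w0: "w \<noteq> 0" and wo: "\<And>y. y \<in> span {x, e} \<Longrightarrow> orthogonal w y"
    using orthogonal_to_subspace_exists[OF dimlt] by blast
  have wx: "inner x w = 0" and we: "inner e w = 0"
    using wo[of x] wo[of e] by (auto simp: span_base orthogonal_def inner_commute)
  show ?thesis
  proof (cases "\<forall>a\<in>A. inner a w = 0")
    case True
    have "\<forall>\<sigma>>0. \<exists>a\<in>A. a \<noteq> x \<and> inner a w < \<sigma> * norm (a - x)"
      using True a2 by auto
    thus ?thesis using True w0 wx by auto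
  next
    case False
    then obtain a0 where a0A: "a0 \<in> A" and a0w: "inner a0 w \<noteq> 0" by auto
    define v where "v = (if inner a0 w < 0 then w else - w)"
    have a0v: "inner a0 v < 0" using a0w by (simp add: v_def)
    have vx: "inner x v = 0" and ve: "inner e v = 0" using wx we by (simp_all add: v_def)
    have v0: "v \<noteq> 0" using w0 by (simp add: v_def)
    define S where "S = {t::real. 0 \<le> t \<and> (\<forall>a\<in>A. 0 \<le> inner a e + t * inner a v)}"
    have S0: "0 \<in> S" using sup by (simp add: S_def)
    have Sbdd: "bdd_above S"
    proof (rule bdd_aboveI)
      fix t assume "t \<in> S"
      hence "0 \<le> inner a0 e + t * inner a0 v" using a0A by (simp add: S_def)
      thus "t \<le> inner a0 e / (- inner a0 v)" using a0v by (subst pos_le_divide_eq) (auto simp: algebra_simps)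
    qed
    have Scl: "closed S"
    proof -
      have "S = {0..} \<inter> (\<Inter>a\<in>A. {t. 0 \<le> inner a e + t * inner a v})"
        unfolding S_def by auto
      moreover have "closed (\<Inter>a\<in>A. {t::real. 0 \<le> inner a e + t * inner a v})"
        by (intro closed_INT ballI closed_Collect_le continuous_intros)
      ultimately show ?thesis by (simp add: closed_Int)
    qed
    define ts where "ts = Sup S"
    have tsS: "ts \<in> S" unfolding ts_def using closed_contains_Sup[OF _ Sbdd Scl] S0 by auto
    define e' where "e' = e + ts *\<^sub>R v"
    have ie': "inner a e' = inner a e + ts * inner a v" for a by (simp add: e'_def inner_add_right)
    have e'0: "e' \<noteq> 0"
    proof
      assume "e' = 0"
      hence "inner e e' = 0" by simp
      moreover have "inner e e' = 1" unfolding ie' using ne ve by (simp add: in1)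
      ultimately show False by simp
    qed
    have xe': "inner x e' = 0" unfolding ie' using xe vx by simp
    have supp: "\<forall>a\<in>A. inner a e' \<ge> 0" using tsS unfolding ie' S_def by auto
    have slope: "\<forall>\<sigma>>0. \<exists>a\<in>A. a \<noteq> x \<and> inner a e' < \<sigma> * norm (a - x)"
    proof (rule ccontr)
      assume "\<not> ?thesis"
      then obtain \<sigma> where sp: "\<sigma> > 0" and hs: "\<forall>a\<in>A. a \<noteq> x \<longrightarrow> inner a e' \<ge> \<sigma> * norm (a - x)"
        by (auto simp: not_less)
      define h where "h = \<sigma> / norm v"
      have hp: "h > 0" using sp v0 by (simp add: h_def)
      have "ts + h \<in> S"
      proof -
        have "0 \<le> inner a e + (ts + h) * inner a v" if aA: "a \<in> A" for a
        proof (cases "a = x")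
          case True thus ?thesis using xe vx by simp
        next
          case False
          have "inner a v = inner (a - x) v" using vx by (simp add: inner_diff_left)
          moreover have "- inner (a - x) v \<le> norm (a - x) * norm v"
            using norm_cauchy_schwarz[of "- (a - x)" v] by (simp only: norm_minus_cancel inner_minus_left)
          ultimately have "- (h * inner a v) \<le> h * (norm (a - x) * norm v)"
            using hp by (metis minus_mult_right mult_left_mono less_imp_le)
          also have "\<dots> = \<sigma> * norm (a - x)" using v0 by (simp add: h_def)
          finally have "- (h * inner a v) \<le> \<sigma> * norm (a - x)" .
          moreover have "inner a e' \<ge> \<sigma> * norm (a - x)" using hs aA False by auto
          ultimately show ?thesis unfolding ie' by (simp add: algebra_simps)
        qed
        thus ?thesis using tsS hp by (simp add: S_def)
      qed
      hence "ts + h \<le> ts" unfolding ts_def using Sbdd by (rule cSup_upper)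
      thus False using hp by simp
    qed
    show ?thesis using e'0 xe' supp slope by blast
  qed
qed


lemma G3:
  fixes A :: "(real^4) set"
  assumes cA: "compact A" and xA: "x \<in> A" and e0: "e' \<noteq> 0" and xe: "inner x e' = 0"
    and supp: "\<forall>a\<in>A. inner a e' \<ge> 0"
    and slope: "\<forall>\<sigma>>0. \<exists>a\<in>A. a \<noteq> x \<and> inner a e' < \<sigma> * norm (a - x)"
  shows "\<exists>y\<in>A. y \<noteq> x \<and> (\<exists>e. norm e = 1 \<and> inner x e = 0 \<and> 0 \<le> inner y e / norm (x - y) \<and>
     inner y e / norm (x - y) \<le> 1/100 \<and>
     (\<forall>a\<in>A. inner a e - (inner y e / norm (x - y)) * norm (a - x) \<ge> - norm (x - y) / 100))"
proof -
  define e where "e = (1 / norm e') *\<^sub>R e'"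
  have ie: "inner a e = inner a e' / norm e'" for a by (simp add: e_def)
  have ne: "norm e = 1" using e0 by (simp add: e_def)
  have xe1: "inner x e = 0" using xe by (simp add: ie)
  have supe: "\<forall>a\<in>A. inner a e \<ge> 0" using supp by (simp add: ie)
  have "norm e' / 100 > 0" using e0 by simp
  then obtain a1 where a1A: "a1 \<in> A" and a1x: "a1 \<noteq> x"
    and a1s: "inner a1 e' < norm e' / 100 * norm (a1 - x)" using slope by blast
  have a1e: "inner a1 e < norm (a1 - x) / 100"
    using a1s e0 by (simp add: ie divide_less_eq algebra_simps)
  define r where "r = norm (a1 - x)"
  have rpos: "r > 0" using a1x by (simp add: r_def)
  define Ar where "Ar = A \<inter> {a. r \<le> norm (a - x)}"
  have cAr: "compact Ar" unfolding Ar_def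
    by (intro compact_Int_closed cA closed_Collect_le continuous_intros)
  have a1Ar: "a1 \<in> Ar" by (simp add: Ar_def r_def a1A)
  define s where "s a = inner a e / norm (a - x)" for a
  have "continuous_on Ar s" unfolding s_def
    using rpos by (auto simp: Ar_def intro!: continuous_intros)
  then obtain y where yAr: "y \<in> Ar" and ymin: "\<forall>a\<in>Ar. s y \<le> s a"
    using continuous_attains_inf[OF cAr] a1Ar by blast
  have yA: "y \<in> A" and ry: "r \<le> norm (y - x)" using yAr by (auto simp: Ar_def)
  define d where "d = norm (x - y)"
  have dyx: "d = norm (y - x)" by (simp add: d_def norm_minus_commute)
  have dpos: "d > 0" using ry rpos dyx by linarith
  have yx: "y \<noteq> x" using dpos d_def by auto
  define sy where "sy = inner y e / d"
  have sys: "sy = s y" by (simp add: sy_def s_def dyx)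
  have sy1: "sy \<le> 1/100"
  proof -
    have "s a1 < 1/100" using a1e a1x by (simp add: s_def divide_less_eq)
    thus ?thesis using ymin a1Ar sys by fastforce
  qed
  have sy0: "0 \<le> sy" using supe yA dpos by (simp add: sy_def)
  have key: "\<forall>a\<in>A. inner a e - sy * norm (a - x) \<ge> - d / 100"
  proof
    fix a assume aA: "a \<in> A"
    show "inner a e - sy * norm (a - x) \<ge> - d / 100"
    proof (cases "r \<le> norm (a - x)")
      case True
      hence "a \<in> Ar" using aA by (simp add: Ar_def)
      hence "sy \<le> s a" using ymin sys by simp
      hence "sy * norm (a - x) \<le> s a * norm (a - x)" by (simp add: mult_right_mono)
      also have "\<dots> = inner a e" using True rpos by (auto simp add: s_def)
      finally show ?thesis using dpos by simp
    next
      case False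
      have "sy * norm (a - x) \<le> (1/100) * r" using sy0 sy1 False
        by (intro mult_mono) auto
      moreover have "r \<le> d" using ry dyx by simp
      moreover have "inner a e \<ge> 0" using supe aA by simp
      ultimately show ?thesis by simp
    qed
  qed
  show ?thesis using yA yx ne xe1 sy0 sy1 key unfolding sy_def d_def by blast
qed


lemma geo:
  fixes A :: "(real^4) set"
  assumes cA: "compact A" and AS: "A \<subseteq> S3" and Ab: "A \<subseteq> cball one4 (1/8)"
    and x1: "x1 \<in> A" and x2: "x2 \<in> A" and x12: "x1 \<noteq> x2"
  shows "\<exists>x y Q. x \<in> A \<and> y \<in> A \<and> x \<noteq> y \<and> inner (x - y) Q = 0 \<and> inner Q Q = 3/4 \<and>
           inner x Q = norm (x - y) / 4 \<and> (\<forall>a\<in>A. inner a Q > 0)"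
proof -
  have nA: "\<forall>a\<in>A. norm a = 1" using AS by (auto simp: S3_mem)
  have dA: "\<forall>a\<in>A. norm (a - one4) \<le> 1/8" using Ab by (auto simp: dist_norm norm_minus_commute)
  have dist2: "norm (a - b) \<le> 1/4" if "a \<in> A" "b \<in> A" for a b
  proof -
    have "norm (a - b) \<le> norm (a - one4) + norm (b - one4)"
      using norm_triangle_ineq4[of "a - one4" "b - one4"] by simp
    moreover have "norm (a - one4) \<le> 1/8" "norm (b - one4) \<le> 1/8" using dA that by auto
    ultimately show ?thesis by linarith
  qed
  have pos: "\<forall>a\<in>A. a$1 > 0"
  proof
    fix a assume "a \<in> A"
    hence "norm (a - one4) \<le> 1/8" using dA by auto
    hence "\<bar>(a - one4)$1\<bar> \<le> 1/8" using component_le_norm_cart[of "a - one4" 1] by linarith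
    hence "\<bar>a$1 - 1\<bar> \<le> 1/8" by (simp add: one4c)
    thus "a$1 > 0" by linarith
  qed
  obtain x e where xA: "x \<in> A" and ne: "norm e = 1" and xe: "inner x e = 0"
    and sup: "\<forall>a\<in>A. inner a e \<ge> 0"
  proof -
    have "A \<noteq> {}" using x1 by auto
    thus ?thesis using G1[OF cA _ pos] that by blast
  qed
  obtain a2 where a2: "a2 \<in> A" "a2 \<noteq> x" using x1 x2 x12 by metis
  obtain e' where e': "e' \<noteq> 0" "inner x e' = 0" "\<forall>a\<in>A. inner a e' \<ge> 0"
    "\<forall>\<sigma>>0. \<exists>a\<in>A. a \<noteq> x \<and> inner a e' < \<sigma> * norm (a - x)"
    using G2[OF cA xA a2 ne xe sup] by blast
  obtain y e2 where yA: "y \<in> A" and yx: "y \<noteq> x" and ne2: "norm e2 = 1" and xe2: "inner x e2 = 0"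
    and s0: "0 \<le> inner y e2 / norm (x - y)" and s1: "inner y e2 / norm (x - y) \<le> 1/100"
    and key: "\<forall>a\<in>A. inner a e2 - (inner y e2 / norm (x - y)) * norm (a - x) \<ge> - norm (x - y) / 100"
    using G3[OF cA xA e'] by blast
  have hA: "\<forall>a\<in>A. norm a = 1 \<and> norm (a - x) \<le> 1/4 \<and> norm (a - y) \<le> 1/4 \<and>
               inner a e2 - (inner y e2 / norm (x - y)) * norm (a - x) \<ge> - norm (x - y) / 100"
    using nA dist2 xA yA key by blast
  have nx: "norm x = 1" "norm y = 1" using nA xA yA by auto
  have xy: "x \<noteq> y" using yx by auto
  obtain Q where "inner (x - y) Q = 0 \<and> inner Q Q = 3/4 \<and> inner x Q = norm (x - y) / 4 \<and> (\<forall>a\<in>A. inner a Q > 0)"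
    using G4[OF nx xy dist2[OF xA yA] ne2 xe2 s0 s1 hA] by blast
  thus ?thesis using xA yA yx by blast
qed




theorem corollary1p5:
  shows "\<not> (\<exists>\<N>. closed_k_network (top_of_set S3) \<N> \<and> binary \<N> \<and>
            (\<forall>A\<in>\<N>. \<forall>x\<in>S3. \<forall>y\<in>S3. (\<lambda>a. qmult (qmult x a) y) ` A \<in> \<N>))"
proof
  assume "\<exists>\<N>. closed_k_network (top_of_set S3) \<N> \<and> binary \<N> \<and>
            (\<forall>A\<in>\<N>. \<forall>x\<in>S3. \<forall>y\<in>S3. (\<lambda>a. qmult (qmult x a) y) ` A \<in> \<N>)"
  then obtain N where kn: "closed_k_network (top_of_set S3) N" and bin: "binary N"
    and inv: "\<forall>A\<in>N. \<forall>x\<in>S3. \<forall>y\<in>S3. (\<lambda>a. qmult (qmult x a) y) ` A \<in> N" by blast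
  define U where "U = S3 \<inter> ball one4 (1/8)"
  define K where "K = S3 \<inter> cball one4 (1/16)"
  have oU: "openin (top_of_set S3) U" unfolding U_def by (rule openin_open_Int) simp
  have cK: "compact K" unfolding K_def S3_def by (intro compact_Int_closed compact_sphere closed_cball)
  have ckK: "compactin (top_of_set S3) K" using cK by (simp add: compactin_subtopology K_def)
  have KU: "K \<subseteq> U" unfolding K_def U_def by auto
  obtain F where fF: "finite F" and FN: "F \<subseteq> N" and KF: "K \<subseteq> \<Union>F" and FU: "\<Union>F \<subseteq> U"
    using kn[unfolded closed_k_network_def, THEN conjunct2, rule_format, OF conjI[OF oU conjI[OF ckK KU]]] by blast
  have infK: "infinite K"
  proof
    assume finK: "finite K"
    define f :: "real \<Rightarrow> real^4" where "f t = (\<chi> i. if i = 1 then sqrt (1 - t*t) else if i = 2 then t else 0)" for t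
    have f2: "f t $ 2 = t" for t by (simp add: f_def)
    have injf: "inj_on f {0..1/32}"
    proof (rule inj_onI)
      fix s t assume "f s = f t" thus "s = t" by (metis f2)
    qed
    have "f ` {0..1/32} \<subseteq> K"
    proof
      fix z assume "z \<in> f ` {0..1/32}"
      then obtain t where t: "0 \<le> t" "t \<le> 1/32" and z: "z = f t" by auto
      have tt: "t * t \<le> 1/1024"
      proof -
        have "t * t \<le> (1/32) * (1/32)" using t by (intro mult_mono) auto
        thus ?thesis by simp
      qed
      have tt0: "0 \<le> t * t" by simp
      define c where "c = sqrt (1 - t*t)"
      have cc: "c * c = 1 - t*t" unfolding c_def using tt by (intro real_sqrt_mult_self[THEN trans]) simp
      have c01: "0 \<le> c" "c \<le> 1" unfolding c_def using tt tt0 by auto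
      have zc: "z$1 = c" "z$2 = t" "z$3 = 0" "z$4 = 0" unfolding z f_def c_def by simp_all
      have "(norm z)^2 = c*c + t*t" unfolding norm4sq zc by (simp add: power2_eq_square)
      hence "(norm z)^2 = 1" using cc by simp
      hence nz: "norm z = 1" using norm_ge_zero[of z] by (auto simp add: power2_eq_1_iff)
      have d2: "(norm (z - one4))^2 = (c - 1)*(c - 1) + t*t"
        unfolding norm4sq vector_minus_component zc one4c by (simp add: power2_eq_square)
      have m1: "(1 - c)*(1 - c) \<le> (1 - c)*(1 + c)" using c01 by (intro mult_left_mono) auto
      have m2: "(c - 1)*(c - 1) = (1 - c)*(1 - c)" by algebra
      have m3: "(1 - c)*(1 + c) = t*t" using cc by algebra
      have "(norm (z - one4))^2 \<le> 2 * (t*t)" using d2 m1 m2 m3 by linarith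
      also have "\<dots> \<le> (1/16)^2" using tt by (simp add: power2_eq_square)
      finally have "(norm (z - one4))^2 \<le> (1/16)^2" .
      hence "norm (z - one4) \<le> 1/16" by (rule power2_le_imp_le) simp
      thus "z \<in> K" using nz by (simp add: K_def S3_mem dist_norm norm_minus_commute)
    qed
    hence "finite (f ` {0..1/32})" using finK by (rule finite_subset)
    hence "finite {0..1/32::real}" using injf by (rule finite_imageD)
    thus False using infinite_Icc[of 0 "1/32::real"] by simp
  qed
  obtain A x1 x2 where AF: "A \<in> F" and x: "x1 \<in> A" "x2 \<in> A" "x1 \<noteq> x2"
  proof (rule ccontr)
    assume "\<not> thesis"
    hence sub: "\<forall>A\<in>F. \<forall>a\<in>A. \<forall>b\<in>A. a = b" using that by blast
    have "\<forall>A\<in>F. finite A"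
    proof
      fix A assume "A \<in> F"
      hence ss: "\<forall>a\<in>A. \<forall>b\<in>A. a = b" using sub by blast
      show "finite A"
      proof (cases "A = {}")
        case False
        then obtain a where "a \<in> A" by auto
        hence "A \<subseteq> {a}" using ss by auto
        thus ?thesis using finite_subset by auto
      qed simp
    qed
    hence "finite (\<Union>F)" using fF by (intro finite_Union) auto
    hence "finite K" using KF by (rule finite_subset[rotated])
    thus False using infK by simp
  qed
  have AN: "A \<in> N" using AF FN by (rule subsetD[rotated])
  have clA: "closedin (top_of_set S3) A" using kn[unfolded closed_k_network_def, THEN conjunct1] AN by blast
  have AS: "A \<subseteq> S3" using closedin_subset[OF clA] by simp
  have "closed A" using clA by (rule closedin_closed_trans) (simp add: S3_def)
  moreover have "bounded A" using AS unfolding S3_def by (rule bounded_subset[OF bounded_sphere])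
  ultimately have cA: "compact A" by (simp add: compact_eq_bounded_closed)
  have Ab: "A \<subseteq> cball one4 (1/8)" using AF FU unfolding U_def by auto
  obtain x y Q where xy: "x \<in> A" "y \<in> A" "x \<noteq> y" and Q: "inner (x - y) Q = 0" "inner Q Q = 3/4"
     "inner x Q = norm (x - y) / 4" "\<forall>a\<in>A. inner a Q > 0"
    using geo[OF cA AS Ab x] by blast
  have nxy: "norm x = 1" "norm y = 1" using xy AS by (auto simp: S3_mem)
  show False using std_contra[OF bin inv AN xy nxy Q] .
qed


end
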